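(* Let $M\ge2$ be an integer, $\tau,\alpha>0$, $R\in(0,+\infty]$ with $R>2M\tau$ and $\alpha\le1/(4M\tau)$, and let $\boldsymbol\lambda^*\in\mathbb R^M$ with $\|\boldsymbol\lambda^*\|_1\le R-2M\tau$. Let $\pi$ be the sparsity prior and $p_0$ the probability measure defined in the context. Then $$\int_{\mathbb R^M}(\lambda_1-\lambda_1^* )^2\,p_0(d\boldsymbol\lambda)\le4\tau^2e^{4M\alpha\tau},\qquad \mathcal K(p_0,\pi)\le2(\alpha\|\boldsymbol\lambda^*\|_1+1)+4\sum_{j=1}^M\log\big(1+|\lambda_j^*|/\tau\big).$$
   Context: $\bar\omega$ is the Huber function: $\bar\omega(t)=t^2$ if $|t|\le1$, $\bar\omega(t)=2|t|-1$ otherwise. The sparsity prior is the probability measure on $\mathbb R^M$ $$\pi(d\boldsymbol\lambda)=\frac{\tau^{2M}}{C_{\alpha,\tau,R}}\Big\{\prod_{j=1}^M\frac{e^{-\bar\omega(\alpha\lambda_j)}}{(\tau^2+\lambda_j^2)^2}\Big\}\mathbf 1(\|\boldsymbol\lambda\|_1\le R)\,d\boldsymbol\lambda$$ with $C_{\alpha,\tau,R}$ the normalizing constant. $B_1(r)=\{\boldsymbol u\in\mathbb R^M:\|\boldsymbol u\|_1\le r\}$. The probability measure $p_0$ has Lebesgue density $\frac{dp_0}{d\boldsymbol\lambda}(\boldsymbol\lambda)\propto\frac{d\pi}{d\boldsymbol\lambda}(\boldsymbol\lambda-\boldsymbol\lambda^* )\,\mathbf 1_{B_1(2M\tau)}(\boldsymbol\lambda-\boldsymbol\lambda^*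 )$. $\mathcal K$ denotes the Kullback–Leibler divergence. *)

theory Defs
  imports "HOL-Probability.Probability"
begin

text \<open>Vectors of R^M are represented as functions nat => real restricted to indices 0..M-1
  (coordinate lambda_1 is index 0); Lebesgue measure on R^M is the product measure.\<close>

definition lebM :: "nat \<Rightarrow> (nat \<Rightarrow> real) measure" where
  "lebM M = PiM {..<M} (\<lambda>_. lborel)"

definition huber :: "real \<Rightarrow> real" where
  "huber t = (if \<bar>t\<bar> \<le> 1 then t\<^sup>2 else 2 * \<bar>t\<bar> - 1)"

definition l1norm :: "nat \<Rightarrow> (nat \<Rightarrow> real) \<Rightarrow> real" where
  "l1norm M x = (\<Sum>j<M. \<bar>x j\<bar>)"

definition prior_unnorm :: "nat \<Rightarrow> real \<Rightarrow> real \<Rightarrow> ereal \<Rightarrow> (nat \<Rightarrow> real) \<Rightarrow> real" where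
  "prior_unnorm M \<alpha> \<tau> R x =
     \<tau> ^ (2 * M) * (\<Prod>j<M. exp (- huber (\<alpha> * x j)) / (\<tau>\<^sup>2 + (x j)\<^sup>2)\<^sup>2)
       * (if ereal (l1norm M x) \<le> R then 1 else 0)"

definition prior_const :: "nat \<Rightarrow> real \<Rightarrow> real \<Rightarrow> ereal \<Rightarrow> real" where
  "prior_const M \<alpha> \<tau> R = (\<integral>x. prior_unnorm M \<alpha> \<tau> R x \<partial>lebM M)"

definition prior_dens :: "nat \<Rightarrow> real \<Rightarrow> real \<Rightarrow> ereal \<Rightarrow> (nat \<Rightarrow> real) \<Rightarrow> real" where
  "prior_dens M \<alpha> \<tau> R x = prior_unnorm M \<alpha> \<tau> R x / prior_const M \<alpha> \<tau> R"

definition sparsity_prior :: "nat \<Rightarrow> real \<Rightarrow> real \<Rightarrow> ereal \<Rightarrow> (nat \<Rightarrow> real) measure" where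
  "sparsity_prior M \<alpha> \<tau> R = density (lebM M) (\<lambda>x. ennreal (prior_dens M \<alpha> \<tau> R x))"

definition p0_unnorm :: "nat \<Rightarrow> real \<Rightarrow> real \<Rightarrow> ereal \<Rightarrow> (nat \<Rightarrow> real) \<Rightarrow> (nat \<Rightarrow> real) \<Rightarrow> real" where
  "p0_unnorm M \<alpha> \<tau> R ls x =
     prior_dens M \<alpha> \<tau> R (\<lambda>j. x j - ls j)
       * (if l1norm M (\<lambda>j. x j - ls j) \<le> 2 * real M * \<tau> then 1 else 0)"

definition p0 :: "nat \<Rightarrow> real \<Rightarrow> real \<Rightarrow> ereal \<Rightarrow> (nat \<Rightarrow> real) \<Rightarrow> (nat \<Rightarrow> real) measure" where
  "p0 M \<alpha> \<tau> R ls = density (lebM M)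
     (\<lambda>x. ennreal (p0_unnorm M \<alpha> \<tau> R ls x / (\<integral>y. p0_unnorm M \<alpha> \<tau> R ls y \<partial>lebM M)))"

end

theory Submission
  imports Defs "HOL-Real_Asymp.Real_Asymp"
begin


lemma int1:
  fixes \<tau> :: real assumes t: "\<tau> > 0"
  shows "integrable lborel (\<lambda>x. 1/(\<tau>\<^sup>2+x\<^sup>2))" "integral\<^sup>L lborel (\<lambda>x. 1/(\<tau>\<^sup>2+x\<^sup>2)) = pi/\<tau>"
proof -
  have pos: "\<And>x. \<tau>\<^sup>2 + x\<^sup>2 > 0" using t by (simp add: add_pos_nonneg)
  have D: "DERIV (\<lambda>x. arctan (x/\<tau>)/\<tau>) x :> 1/(\<tau>\<^sup>2+x\<^sup>2)" for x
  proof -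
    have "0 < \<tau>*(\<tau>*(\<tau>*\<tau>)) + \<tau>*(\<tau>*(x*x))" using t by (intro add_pos_nonneg) auto
    then show ?thesis using t pos[of x]
    by (auto intro!: derivative_eq_intros simp: field_simps power2_eq_square)
  qed
  have A: "(((\<lambda>x. arctan (x/\<tau>)/\<tau>) \<circ> real_of_ereal) \<longlongrightarrow> (-(pi/2))/\<tau>) (at_right (-\<infinity>))"
    unfolding ereal_tendsto_simps
  proof (intro tendsto_intros filterlim_compose[OF tendsto_arctan_at_bot])
    show "filterlim (\<lambda>x. x/\<tau>) at_bot at_bot" using t by real_asymp
  qed (use t in auto)
  have B: "(((\<lambda>x. arctan (x/\<tau>)/\<tau>) \<circ> real_of_ereal) \<longlongrightarrow> (pi/2)/\<tau>) (at_left \<infinity>)"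
    unfolding ereal_tendsto_simps
  proof (intro tendsto_intros filterlim_compose[OF tendsto_arctan_at_top])
    show "filterlim (\<lambda>x. x/\<tau>) at_top at_top" using t by real_asymp
  qed (use t in auto)
  note R = interval_integral_FTC_nonneg[of "-\<infinity>" "\<infinity>" _ "\<lambda>x. 1/(\<tau>\<^sup>2+x\<^sup>2)", OF _ D _ _ A B]
  have c: "isCont (\<lambda>x. 1/(\<tau>\<^sup>2+x\<^sup>2)) x" for x using pos[of x] by (auto intro!: continuous_intros)
  have n: "0 \<le> 1/(\<tau>\<^sup>2+x\<^sup>2)" for x using pos[of x] by simp
  from R(1)[OF _ c] show "integrable lborel (\<lambda>x. 1/(\<tau>\<^sup>2+x\<^sup>2))"
    by (simp add: n einterval_eq_UNIV set_integrable_def)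
  from R(2)[OF _ c] show "integral\<^sup>L lborel (\<lambda>x. 1/(\<tau>\<^sup>2+x\<^sup>2)) = pi/\<tau>"
    by (simp add: n einterval_eq_UNIV set_lebesgue_integral_def interval_lebesgue_integral_def)
qed

lemma int2:
  fixes \<tau> :: real assumes t: "\<tau> > 0"
  shows "integrable lborel (\<lambda>x. 1/(\<tau>\<^sup>2+x\<^sup>2)\<^sup>2)" "integral\<^sup>L lborel (\<lambda>x. 1/(\<tau>\<^sup>2+x\<^sup>2)\<^sup>2) = pi/(2*\<tau>^3)"
proof -
  have pos: "\<And>x. \<tau>\<^sup>2 + x\<^sup>2 > 0" using t by (simp add: add_pos_nonneg)
  define F where "F x = (x/(\<tau>\<^sup>2+x\<^sup>2) + arctan (x/\<tau>)/\<tau>)/(2*\<tau>\<^sup>2)" for x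
  have D: "DERIV F x :> 1/(\<tau>\<^sup>2+x\<^sup>2)\<^sup>2" for x
  proof -
    define d where "d = \<tau>\<^sup>2+x\<^sup>2"
    have dp: "d > 0" using pos[of x] d_def by simp
    have D1: "DERIV (\<lambda>x. x/(\<tau>\<^sup>2+x\<^sup>2)) x :> (1 * (\<tau>\<^sup>2+x\<^sup>2) - (2*x) * x)/(\<tau>\<^sup>2+x\<^sup>2)\<^sup>2"
    proof -
      have d2: "DERIV (\<lambda>x. \<tau>\<^sup>2+x\<^sup>2) x :> 2*x" by (auto intro!: derivative_eq_intros)
      have ne: "\<tau>\<^sup>2+x\<^sup>2 \<noteq> 0" using pos[of x] by (metis order_less_irrefl)
      show ?thesis using DERIV_quotient[OF DERIV_ident d2 ne] by (simp add: numeral_2_eq_2)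
    qed
    have D2: "DERIV (\<lambda>x. arctan (x/\<tau>)/\<tau>) x :> 1/(\<tau>\<^sup>2+x\<^sup>2)"
    proof -
      have "0 < \<tau>*(\<tau>*(\<tau>*\<tau>)) + \<tau>*(\<tau>*(x*x))" using t by (intro add_pos_nonneg) auto
      then show ?thesis using t pos[of x]
      by (auto intro!: derivative_eq_intros simp: field_simps power2_eq_square)
    qed
    have DF: "DERIV F x :> ((1 * (\<tau>\<^sup>2+x\<^sup>2) - (2*x) * x)/(\<tau>\<^sup>2+x\<^sup>2)\<^sup>2 + 1/(\<tau>\<^sup>2+x\<^sup>2))/(2*\<tau>\<^sup>2)"
      unfolding F_def by (rule DERIV_cdivide[OF DERIV_add[OF D1 D2]])
    have x2: "x\<^sup>2 = d - \<tau>\<^sup>2" using d_def by simp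
    have "((1 * (\<tau>\<^sup>2+x\<^sup>2) - (2*x) * x)/(\<tau>\<^sup>2+x\<^sup>2)\<^sup>2 + 1/(\<tau>\<^sup>2+x\<^sup>2))/(2*\<tau>\<^sup>2)
       = ((d - 2 * x\<^sup>2)/d\<^sup>2 + 1/d)/(2*\<tau>\<^sup>2)" unfolding d_def by (simp add: power2_eq_square)
    also have "\<dots> = ((d - 2 * (d - \<tau>\<^sup>2))/d\<^sup>2 + 1/d)/(2*\<tau>\<^sup>2)" by (simp add: x2)
    also have "\<dots> = 1/d\<^sup>2" using dp t by (simp add: field_simps power2_eq_square)
    finally show ?thesis using DF d_def by simp
  qed
  have A: "((F \<circ> real_of_ereal) \<longlongrightarrow> (0 + (-(pi/2))/\<tau>)/(2*\<tau>\<^sup>2)) (at_right (-\<infinity>))"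
    unfolding ereal_tendsto_simps F_def
  proof (intro tendsto_intros filterlim_compose[OF tendsto_arctan_at_bot])
    show "filterlim (\<lambda>x. x/\<tau>) at_bot at_bot" using t by real_asymp
    show "((\<lambda>x. x/(\<tau>\<^sup>2+x\<^sup>2)) \<longlongrightarrow> 0) at_bot" using t by real_asymp
  qed (use t in auto)
  have B: "((F \<circ> real_of_ereal) \<longlongrightarrow> (0 + (pi/2)/\<tau>)/(2*\<tau>\<^sup>2)) (at_left \<infinity>)"
    unfolding ereal_tendsto_simps F_def
  proof (intro tendsto_intros filterlim_compose[OF tendsto_arctan_at_top])
    show "filterlim (\<lambda>x. x/\<tau>) at_top at_top" using t by real_asymp
    show "((\<lambda>x. x/(\<tau>\<^sup>2+x\<^sup>2)) \<longlongrightarrow> 0) at_top" using t by real_asymp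
  qed (use t in auto)
  note R = interval_integral_FTC_nonneg[of "-\<infinity>" "\<infinity>" _ "\<lambda>x. 1/(\<tau>\<^sup>2+x\<^sup>2)\<^sup>2", OF _ D _ _ A B]
  have c: "isCont (\<lambda>x. 1/(\<tau>\<^sup>2+x\<^sup>2)\<^sup>2) x" for x using pos[of x] by (auto intro!: continuous_intros)
  have n: "0 \<le> 1/(\<tau>\<^sup>2+x\<^sup>2)\<^sup>2" for x using pos[of x] by simp
  from R(1)[OF _ c] show "integrable lborel (\<lambda>x. 1/(\<tau>\<^sup>2+x\<^sup>2)\<^sup>2)"
    by (simp add: n einterval_eq_UNIV set_integrable_def)
  have nAE: "AE x in lborel. -\<infinity> < ereal x \<longrightarrow> ereal x < \<infinity> \<longrightarrow> 0 \<le> 1/(\<tau>\<^sup>2+x\<^sup>2)\<^sup>2"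
    by (intro AE_I2 impI n)
  have "(LBINT x=-\<infinity>..\<infinity>. 1/(\<tau>\<^sup>2+x\<^sup>2)\<^sup>2) = (0 + (pi/2)/\<tau>)/(2*\<tau>\<^sup>2) - (0 + (-(pi/2))/\<tau>)/(2*\<tau>\<^sup>2)"
    by (rule R(2)[OF _ c nAE]) simp
  also have "\<dots> = pi/(2*\<tau>^3)" using t by (simp add: field_simps power2_eq_square power3_eq_cube)
  finally show "integral\<^sup>L lborel (\<lambda>x. 1/(\<tau>\<^sup>2+x\<^sup>2)\<^sup>2) = pi/(2*\<tau>^3)"
    by (simp add: einterval_eq_UNIV set_lebesgue_integral_def interval_lebesgue_integral_def)
qed

lemma int3:
  fixes \<tau> :: real assumes t: "\<tau> > 0"
  shows "integrable lborel (\<lambda>x. x\<^sup>2/(\<tau>\<^sup>2+x\<^sup>2)\<^sup>2)" "integral\<^sup>L lborel (\<lambda>x. x\<^sup>2/(\<tau>\<^sup>2+x\<^sup>2)\<^sup>2) = \<tau>\<^sup>2 * (pi/(2*\<tau>^3))"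
proof -
  have pos: "\<And>x. \<tau>\<^sup>2 + x\<^sup>2 > 0" using t by (simp add: add_pos_nonneg)
  have eq: "(\<lambda>x. x\<^sup>2/(\<tau>\<^sup>2+x\<^sup>2)\<^sup>2) = (\<lambda>x. 1/(\<tau>\<^sup>2+x\<^sup>2) - \<tau>\<^sup>2 * (1/(\<tau>\<^sup>2+x\<^sup>2)\<^sup>2))"
  proof
    fix x show "x\<^sup>2/(\<tau>\<^sup>2+x\<^sup>2)\<^sup>2 = 1/(\<tau>\<^sup>2+x\<^sup>2) - \<tau>\<^sup>2 * (1/(\<tau>\<^sup>2+x\<^sup>2)\<^sup>2)"
    proof -
      define d where "d = \<tau>\<^sup>2+x\<^sup>2"
      have dp: "d > 0" using pos[of x] d_def by simp
      have x2: "x\<^sup>2 = d - \<tau>\<^sup>2" using d_def by simp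
      show ?thesis unfolding x2 unfolding d_def[symmetric] using dp by (simp add: field_simps power2_eq_square)
    qed
  qed
  show "integrable lborel (\<lambda>x. x\<^sup>2/(\<tau>\<^sup>2+x\<^sup>2)\<^sup>2)" unfolding eq
    by (rule Bochner_Integration.integrable_diff[OF int1(1)[OF t] integrable_mult_right[OF int2(1)[OF t]]])
  have "integral\<^sup>L lborel (\<lambda>x. x\<^sup>2/(\<tau>\<^sup>2+x\<^sup>2)\<^sup>2) = integral\<^sup>L lborel (\<lambda>x. 1/(\<tau>\<^sup>2+x\<^sup>2)) - integral\<^sup>L lborel (\<lambda>x. \<tau>\<^sup>2 * (1/(\<tau>\<^sup>2+x\<^sup>2)\<^sup>2))"
    unfolding eq by (rule Bochner_Integration.integral_diff[OF int1(1)[OF t] integrable_mult_right[OF int2(1)[OF t]]])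
  also have "integral\<^sup>L lborel (\<lambda>x. \<tau>\<^sup>2 * (1/(\<tau>\<^sup>2+x\<^sup>2)\<^sup>2)) = \<tau>\<^sup>2 * integral\<^sup>L lborel (\<lambda>x. 1/(\<tau>\<^sup>2+x\<^sup>2)\<^sup>2)"
    by (rule integral_mult_right_zero)
  finally show "integral\<^sup>L lborel (\<lambda>x. x\<^sup>2/(\<tau>\<^sup>2+x\<^sup>2)\<^sup>2) = \<tau>\<^sup>2 * (pi/(2*\<tau>^3))"
    unfolding int1(2)[OF t] int2(2)[OF t] using t by (simp add: field_simps power2_eq_square power3_eq_cube)
qed

lemma int4:
  fixes \<tau> :: real assumes t: "\<tau> > 0"
  shows "integrable lborel (\<lambda>x. \<bar>x\<bar>/(\<tau>\<^sup>2+x\<^sup>2)\<^sup>2)" "integral\<^sup>L lborel (\<lambda>x. \<bar>x\<bar>/(\<tau>\<^sup>2+x\<^sup>2)\<^sup>2) \<le> \<tau> * (pi/(2*\<tau>^3))"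
proof -
  have pos: "\<And>x. \<tau>\<^sup>2 + x\<^sup>2 > 0" using t by (simp add: add_pos_nonneg)
  have le: "\<bar>x\<bar>/(\<tau>\<^sup>2+x\<^sup>2)\<^sup>2 \<le> 1/(2*\<tau>) * (1/(\<tau>\<^sup>2+x\<^sup>2))" for x
  proof -
    have "2*\<tau>*\<bar>x\<bar> \<le> \<tau>\<^sup>2+x\<^sup>2" using sum_squares_bound[of \<tau> "\<bar>x\<bar>"] by simp
    then have "\<bar>x\<bar> \<le> (\<tau>\<^sup>2+x\<^sup>2)/(2*\<tau>)" using t by (simp add: field_simps)
    then have "\<bar>x\<bar>/(\<tau>\<^sup>2+x\<^sup>2)\<^sup>2 \<le> ((\<tau>\<^sup>2+x\<^sup>2)/(2*\<tau>))/(\<tau>\<^sup>2+x\<^sup>2)\<^sup>2"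
      using pos[of x] by (intro divide_right_mono) auto
    also have "\<dots> = 1/(2*\<tau>) * (1/(\<tau>\<^sup>2+x\<^sup>2))"
    proof -
      define d where "d = \<tau>\<^sup>2+x\<^sup>2"
      have dp: "d > 0" using pos[of x] d_def by simp
      show ?thesis unfolding d_def[symmetric] using dp t by (simp add: field_simps power2_eq_square)
    qed
    finally show ?thesis .
  qed
  have i1: "integrable lborel (\<lambda>x. 1/(2*\<tau>) * (1/(\<tau>\<^sup>2+x\<^sup>2)))" by (rule integrable_mult_right[OF int1(1)[OF t]])
  show i: "integrable lborel (\<lambda>x. \<bar>x\<bar>/(\<tau>\<^sup>2+x\<^sup>2)\<^sup>2)"
  proof (rule Bochner_Integration.integrable_bound[OF i1])
    show "AE x in lborel. norm (\<bar>x\<bar>/(\<tau>\<^sup>2+x\<^sup>2)\<^sup>2) \<le> norm (1/(2*\<tau>) * (1/(\<tau>\<^sup>2+x\<^sup>2)))"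
    proof (rule AE_I2)
      fix x
      have "0 \<le> \<bar>x\<bar>/(\<tau>\<^sup>2+x\<^sup>2)\<^sup>2" by simp
      moreover have "0 \<le> 1/(2*\<tau>) * (1/(\<tau>\<^sup>2+x\<^sup>2))" using t pos[of x] by simp
      ultimately show "norm (\<bar>x\<bar>/(\<tau>\<^sup>2+x\<^sup>2)\<^sup>2) \<le> norm (1/(2*\<tau>) * (1/(\<tau>\<^sup>2+x\<^sup>2)))"
        using le[of x] by (simp only: real_norm_def abs_of_nonneg)
    qed
  qed simp
  have "integral\<^sup>L lborel (\<lambda>x. \<bar>x\<bar>/(\<tau>\<^sup>2+x\<^sup>2)\<^sup>2) \<le> integral\<^sup>L lborel (\<lambda>x. 1/(2*\<tau>) * (1/(\<tau>\<^sup>2+x\<^sup>2)))"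
    by (rule integral_mono[OF i i1 le])
  also have "\<dots> = 1/(2*\<tau>) * integral\<^sup>L lborel (\<lambda>x. 1/(\<tau>\<^sup>2+x\<^sup>2))"
    by (rule integral_mult_right_zero)
  also have "\<dots> = \<tau> * (pi/(2*\<tau>^3))" unfolding int1(2)[OF t] using t by (simp add: field_simps power3_eq_cube)
  finally show "integral\<^sup>L lborel (\<lambda>x. \<bar>x\<bar>/(\<tau>\<^sup>2+x\<^sup>2)\<^sup>2) \<le> \<tau> * (pi/(2*\<tau>^3))" .
qed

lemma shift:
  fixes f :: "real \<Rightarrow> real"
  shows "integrable lborel (\<lambda>x. f (x - l)) = integrable lborel f"
    "integral\<^sup>L lborel (\<lambda>x. f (x - l)) = integral\<^sup>L lborel f"
  using lborel_integrable_real_affine_iff[of 1 f "-l"] lborel_integral_real_affine[of 1 f "-l"]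
  by simp_all



definition phi :: "real \<Rightarrow> real \<Rightarrow> real" where "phi \<tau> t = 1/(\<tau>\<^sup>2+t\<^sup>2)\<^sup>2"
definition H0 :: "nat \<Rightarrow> real \<Rightarrow> (nat \<Rightarrow> real) \<Rightarrow> real" where
  "H0 M \<tau> u = \<tau>^(2*M) * (\<Prod>j<M. phi \<tau> (u j))"

lemma psf: "product_sigma_finite (\<lambda>_::nat. lborel :: real measure)"
  by (simp add: product_sigma_finite_def lborel.sigma_finite_measure_axioms)

lemma prod_int:
  fixes f :: "nat \<Rightarrow> real \<Rightarrow> real"
  assumes "\<And>j. j < M \<Longrightarrow> integrable lborel (f j)"
  shows "integrable (lebM M) (\<lambda>x. \<Prod>j<M. f j (x j))"
    "integral\<^sup>L (lebM M) (\<lambda>x. \<Prod>j<M. f j (x j)) = (\<Prod>j<M. integral\<^sup>L lborel (f j))"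
  using product_sigma_finite.product_integrable_prod[OF psf, of "{..<M}" f]
    product_sigma_finite.product_integral_prod[OF psf, of "{..<M}" f] assms
  unfolding lebM_def by auto

lemma phi_pos: "\<tau> > 0 \<Longrightarrow> phi \<tau> t > 0"
  unfolding phi_def by (simp add: add_pos_nonneg)

lemma phi_int: assumes "\<tau> > 0"
  shows "integrable lborel (\<lambda>t. phi \<tau> (t - c))" "integral\<^sup>L lborel (\<lambda>t. phi \<tau> (t - c)) = pi/(2*\<tau>^3)"
  using shift[of "phi \<tau>" c] int2[OF assms] unfolding phi_def by simp_all

lemma phi_int_abs: assumes "\<tau> > 0"
  shows "integrable lborel (\<lambda>t. \<bar>t - c\<bar> * phi \<tau> (t - c))" "integral\<^sup>L lborel (\<lambda>t. \<bar>t - c\<bar> * phi \<tau> (t - c)) \<le> \<tau> * (pi/(2*\<tau>^3))"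
  using shift[of "\<lambda>t. \<bar>t\<bar> * phi \<tau> t" c] int4[OF assms] unfolding phi_def by simp_all

lemma phi_int_sq: assumes "\<tau> > 0"
  shows "integrable lborel (\<lambda>t. (t - c)\<^sup>2 * phi \<tau> (t - c))" "integral\<^sup>L lborel (\<lambda>t. (t - c)\<^sup>2 * phi \<tau> (t - c)) = \<tau>\<^sup>2 * (pi/(2*\<tau>^3))"
  using shift[of "\<lambda>t. t\<^sup>2 * phi \<tau> t" c] int3[OF assms] unfolding phi_def by simp_all

lemma prod_pick:
  assumes "finite I" "k \<in> I"
  shows "(\<Prod>j\<in>I. if j = k then a else b j) = a * (\<Prod>j\<in>I-{k}. b j)"
proof -
  have "(\<Prod>j\<in>I-{k}. if j = k then a else b j) = (\<Prod>j\<in>I-{k}. b j)" by (rule prod.cong) auto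
  then show ?thesis using prod.remove[OF assms, of "\<lambda>j. if j = k then a else b j"] by simp
qed

lemma H0_int:
  assumes t: "\<tau> > 0"
  shows "integrable (lebM M) (\<lambda>x. H0 M \<tau> (\<lambda>j. x j - l j))"
    "integral\<^sup>L (lebM M) (\<lambda>x. H0 M \<tau> (\<lambda>j. x j - l j)) = \<tau>^(2*M) * (pi/(2*\<tau>^3))^M"
proof -
  note P = prod_int[of M "\<lambda>j t. phi \<tau> (t - l j)", OF phi_int(1)[OF t]]
  show "integrable (lebM M) (\<lambda>x. H0 M \<tau> (\<lambda>j. x j - l j))"
    unfolding H0_def by (rule integrable_mult_right[OF P(1)])
  show "integral\<^sup>L (lebM M) (\<lambda>x. H0 M \<tau> (\<lambda>j. x j - l j)) = \<tau>^(2*M) * (pi/(2*\<tau>^3))^M"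
    unfolding H0_def integral_mult_right_zero P(2) phi_int(2)[OF t] by simp
qed

lemma H0_int_abs:
  assumes t: "\<tau> > 0" and k: "k < M"
  shows "integrable (lebM M) (\<lambda>x. \<bar>x k - l k\<bar> * H0 M \<tau> (\<lambda>j. x j - l j))"
    "integral\<^sup>L (lebM M) (\<lambda>x. \<bar>x k - l k\<bar> * H0 M \<tau> (\<lambda>j. x j - l j)) \<le> \<tau> * (\<tau>^(2*M) * (pi/(2*\<tau>^3))^M)"
proof -
  define f where "f j t = (if j = k then \<bar>t - l j\<bar> * phi \<tau> (t - l j) else phi \<tau> (t - l j))" for j t
  have fi: "integrable lborel (f j)" for j
    unfolding f_def using phi_int(1)[OF t] phi_int_abs(1)[OF t] by (cases "j = k") auto
  have fI: "integral\<^sup>L lborel (f j) = (if j = k then integral\<^sup>L lborel (\<lambda>t. \<bar>t - l k\<bar> * phi \<tau> (t - l k)) else pi/(2*\<tau>^3))" for j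
    unfolding f_def using phi_int(2)[OF t] by (cases "j = k") auto
  have eq: "\<bar>x k - l k\<bar> * H0 M \<tau> (\<lambda>j. x j - l j) = \<tau>^(2*M) * (\<Prod>j<M. f j (x j))" for x
  proof -
    have "(\<Prod>j<M. f j (x j)) = (\<Prod>j<M. if j = k then \<bar>x k - l k\<bar> * phi \<tau> (x k - l k) else phi \<tau> (x j - l j))"
      unfolding f_def by (rule prod.cong) auto
    also have "\<dots> = \<bar>x k - l k\<bar> * phi \<tau> (x k - l k) * (\<Prod>j\<in>{..<M}-{k}. phi \<tau> (x j - l j))"
      using k by (intro prod_pick) auto
    also have "\<dots> = \<bar>x k - l k\<bar> * (\<Prod>j<M. phi \<tau> (x j - l j))"
      using prod.remove[of "{..<M}" k "\<lambda>j. phi \<tau> (x j - l j)"] k by simp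
    finally show ?thesis unfolding H0_def by simp
  qed
  note P = prod_int[of M f, OF fi]
  show "integrable (lebM M) (\<lambda>x. \<bar>x k - l k\<bar> * H0 M \<tau> (\<lambda>j. x j - l j))"
    unfolding eq by (rule integrable_mult_right[OF P(1)])
  have "integral\<^sup>L (lebM M) (\<lambda>x. \<bar>x k - l k\<bar> * H0 M \<tau> (\<lambda>j. x j - l j)) = \<tau>^(2*M) * (\<Prod>j<M. integral\<^sup>L lborel (f j))"
    unfolding eq integral_mult_right_zero P(2) ..
  also have "(\<Prod>j<M. integral\<^sup>L lborel (f j)) = integral\<^sup>L lborel (\<lambda>t. \<bar>t - l k\<bar> * phi \<tau> (t - l k)) * (pi/(2*\<tau>^3))^(M-1)"
    unfolding fI using k by (subst prod_pick) auto
  also have "\<tau>^(2*M) * (integral\<^sup>L lborel (\<lambda>t. \<bar>t - l k\<bar> * phi \<tau> (t - l k)) * (pi/(2*\<tau>^3))^(M-1))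
      \<le> \<tau>^(2*M) * ((\<tau> * (pi/(2*\<tau>^3))) * (pi/(2*\<tau>^3))^(M-1))"
    using phi_int_abs(2)[OF t, of "l k"] t by (intro mult_left_mono mult_right_mono) auto
  also have "\<dots> = \<tau> * (\<tau>^(2*M) * (pi/(2*\<tau>^3))^M)"
    using k by (cases M) (auto simp: field_simps)
  finally show "integral\<^sup>L (lebM M) (\<lambda>x. \<bar>x k - l k\<bar> * H0 M \<tau> (\<lambda>j. x j - l j)) \<le> \<tau> * (\<tau>^(2*M) * (pi/(2*\<tau>^3))^M)" .
qed

lemma H0_int_sq:
  assumes t: "\<tau> > 0" and k: "k < M"
  shows "integrable (lebM M) (\<lambda>x. (x k - l k)\<^sup>2 * H0 M \<tau> (\<lambda>j. x j - l j))"
    "integral\<^sup>L (lebM M) (\<lambda>x. (x k - l k)\<^sup>2 * H0 M \<tau> (\<lambda>j. x j - l j)) = \<tau>\<^sup>2 * (\<tau>^(2*M) * (pi/(2*\<tau>^3))^M)"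
proof -
  define f where "f j t = (if j = k then (t - l j)\<^sup>2 * phi \<tau> (t - l j) else phi \<tau> (t - l j))" for j t
  have fi: "integrable lborel (f j)" for j
    unfolding f_def using phi_int(1)[OF t] phi_int_sq(1)[OF t] by (cases "j = k") auto
  have fI: "integral\<^sup>L lborel (f j) = (if j = k then integral\<^sup>L lborel (\<lambda>t. (t - l k)\<^sup>2 * phi \<tau> (t - l k)) else pi/(2*\<tau>^3))" for j
    unfolding f_def using phi_int(2)[OF t] by (cases "j = k") auto
  have eq: "(x k - l k)\<^sup>2 * H0 M \<tau> (\<lambda>j. x j - l j) = \<tau>^(2*M) * (\<Prod>j<M. f j (x j))" for x
  proof -
    have "(\<Prod>j<M. f j (x j)) = (\<Prod>j<M. if j = k then (x k - l k)\<^sup>2 * phi \<tau> (x k - l k) else phi \<tau> (x j - l j))"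
      unfolding f_def by (rule prod.cong) auto
    also have "\<dots> = (x k - l k)\<^sup>2 * phi \<tau> (x k - l k) * (\<Prod>j\<in>{..<M}-{k}. phi \<tau> (x j - l j))"
      using k by (intro prod_pick) auto
    also have "\<dots> = (x k - l k)\<^sup>2 * (\<Prod>j<M. phi \<tau> (x j - l j))"
      using prod.remove[of "{..<M}" k "\<lambda>j. phi \<tau> (x j - l j)"] k by simp
    finally show ?thesis unfolding H0_def by simp
  qed
  note P = prod_int[of M f, OF fi]
  show "integrable (lebM M) (\<lambda>x. (x k - l k)\<^sup>2 * H0 M \<tau> (\<lambda>j. x j - l j))"
    unfolding eq by (rule integrable_mult_right[OF P(1)])
  have "integral\<^sup>L (lebM M) (\<lambda>x. (x k - l k)\<^sup>2 * H0 M \<tau> (\<lambda>j. x j - l j)) = \<tau>^(2*M) * (\<Prod>j<M. integral\<^sup>L lborel (f j))"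
    unfolding eq integral_mult_right_zero P(2) ..
  also have "(\<Prod>j<M. integral\<^sup>L lborel (f j)) = integral\<^sup>L lborel (\<lambda>t. (t - l k)\<^sup>2 * phi \<tau> (t - l k)) * (pi/(2*\<tau>^3))^(M-1)"
    unfolding fI using k by (subst prod_pick) auto
  also have "\<tau>^(2*M) * (integral\<^sup>L lborel (\<lambda>t. (t - l k)\<^sup>2 * phi \<tau> (t - l k)) * (pi/(2*\<tau>^3))^(M-1))
      = \<tau>^(2*M) * ((\<tau>\<^sup>2 * (pi/(2*\<tau>^3))) * (pi/(2*\<tau>^3))^(M-1))"
    using phi_int_sq(2)[OF t, of "l k"] by simp
  also have "\<dots> = \<tau>\<^sup>2 * (\<tau>^(2*M) * (pi/(2*\<tau>^3))^M)"
    using k by (cases M) (auto simp: field_simps)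
  finally show "integral\<^sup>L (lebM M) (\<lambda>x. (x k - l k)\<^sup>2 * H0 M \<tau> (\<lambda>j. x j - l j)) = \<tau>\<^sup>2 * (\<tau>^(2*M) * (pi/(2*\<tau>^3))^M)" .
qed


lemma ind_meas: "(\<lambda>x. H0 M \<tau> (\<lambda>j. x j - l j) * (if l1norm M (\<lambda>j. x j - l j) \<le> 2 * real M * \<tau> then 1 else 0))
   \<in> borel_measurable (lebM M)"
  unfolding lebM_def H0_def phi_def l1norm_def by measurable

lemma H0_pos: "\<tau> > 0 \<Longrightarrow> H0 M \<tau> u > 0"
  unfolding H0_def using phi_pos[of \<tau>] by (auto intro!: mult_pos_pos prod_pos)

lemma H0_nonneg: "\<tau> > 0 \<Longrightarrow> H0 M \<tau> u \<ge> 0"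
  using H0_pos[of \<tau> M u] by simp

lemma markov:
  assumes t: "\<tau> > 0" and M: "M > 0"
  shows "integrable (lebM M) (\<lambda>x. H0 M \<tau> (\<lambda>j. x j - l j) * (if l1norm M (\<lambda>j. x j - l j) \<le> 2 * real M * \<tau> then 1 else 0))"
    "integral\<^sup>L (lebM M) (\<lambda>x. H0 M \<tau> (\<lambda>j. x j - l j) * (if l1norm M (\<lambda>j. x j - l j) \<le> 2 * real M * \<tau> then 1 else 0))
      \<ge> (\<tau>^(2*M) * (pi/(2*\<tau>^3))^M) / 2"
proof -
  define H where "H x = H0 M \<tau> (\<lambda>j. x j - l j)" for x
  define ind where "ind x = (if l1norm M (\<lambda>j. x j - l j) \<le> 2 * real M * \<tau> then 1 else (0::real))" for x
  define c where "c = 1 / (2 * real M * \<tau>)"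
  define K where "K = \<tau>^(2*M) * (pi/(2*\<tau>^3))^M"
  have c0: "c > 0" using t M by (simp add: c_def)
  have Hn: "H x \<ge> 0" for x unfolding H_def using H0_nonneg[OF t] .
  have iH: "integrable (lebM M) H" unfolding H_def by (rule H0_int(1)[OF t])
  have iA: "integrable (lebM M) (\<lambda>x. \<bar>x k - l k\<bar> * H x)" if "k < M" for k
    unfolding H_def by (rule H0_int_abs(1)[OF t that])
  show i1: "integrable (lebM M) (\<lambda>x. H0 M \<tau> (\<lambda>j. x j - l j) * (if l1norm M (\<lambda>j. x j - l j) \<le> 2 * real M * \<tau> then 1 else 0))"
  proof (rule Bochner_Integration.integrable_bound[OF iH ind_meas])
    show "AE x in lebM M. norm (H0 M \<tau> (\<lambda>j. x j - l j) * (if l1norm M (\<lambda>j. x j - l j) \<le> 2 * real M * \<tau> then 1 else 0)) \<le> norm (H x)"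
      using Hn unfolding H_def by (intro AE_I2) auto
  qed
  have i2: "integrable (lebM M) (\<lambda>x. H x - (\<Sum>k<M. c * (\<bar>x k - l k\<bar> * H x)))"
    using iH iA by (intro Bochner_Integration.integrable_diff Bochner_Integration.integrable_sum integrable_mult_right) auto
  have pw: "H x - (\<Sum>k<M. c * (\<bar>x k - l k\<bar> * H x)) \<le> H x * ind x" for x
  proof -
    have "(\<Sum>k<M. c * (\<bar>x k - l k\<bar> * H x)) = c * l1norm M (\<lambda>j. x j - l j) * H x"
      unfolding l1norm_def by (simp add: sum_distrib_left sum_distrib_right mult_ac)
    moreover have "1 - c * l1norm M (\<lambda>j. x j - l j) \<le> ind x"
    proof (cases "l1norm M (\<lambda>j. x j - l j) \<le> 2 * real M * \<tau>")
      case True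
      have "l1norm M (\<lambda>j. x j - l j) \<ge> 0" unfolding l1norm_def by (intro sum_nonneg) auto
      then show ?thesis using True c0 by (simp add: ind_def)
    next
      case False
      then have "c * l1norm M (\<lambda>j. x j - l j) \<ge> c * (2 * real M * \<tau>)" using c0 by simp
      moreover have "c * (2 * real M * \<tau>) = 1" using t M by (simp add: c_def)
      ultimately show ?thesis using False by (simp add: ind_def)
    qed
    ultimately show ?thesis using Hn[of x] mult_left_mono[of "1 - c * l1norm M (\<lambda>j. x j - l j)" "ind x" "H x"]
      by (simp add: algebra_simps)
  qed
  have "integral\<^sup>L (lebM M) (\<lambda>x. H x - (\<Sum>k<M. c * (\<bar>x k - l k\<bar> * H x)))
       = integral\<^sup>L (lebM M) H - (\<Sum>k<M. c * integral\<^sup>L (lebM M) (\<lambda>x. \<bar>x k - l k\<bar> * H x))"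
    using iH iA by (subst Bochner_Integration.integral_diff) (auto intro!: Bochner_Integration.integrable_sum integrable_mult_right simp: Bochner_Integration.integral_sum)
  also have "\<dots> \<ge> K - (\<Sum>k<M. c * (\<tau> * K))"
  proof -
    have "(\<Sum>k<M. c * integral\<^sup>L (lebM M) (\<lambda>x. \<bar>x k - l k\<bar> * H x)) \<le> (\<Sum>k<M. c * (\<tau> * K))"
      using H0_int_abs(2)[OF t] c0 unfolding H_def K_def by (intro sum_mono mult_left_mono) auto
    then show ?thesis using H0_int(2)[OF t, of M l] unfolding H_def K_def by simp
  qed
  also have "K - (\<Sum>k<M. c * (\<tau> * K)) = K / 2" using t M by (simp add: c_def field_simps)
  finally have "K / 2 \<le> integral\<^sup>L (lebM M) (\<lambda>x. H x - (\<Sum>k<M. c * (\<bar>x k - l k\<bar> * H x)))" .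
  also have "\<dots> \<le> integral\<^sup>L (lebM M) (\<lambda>x. H x * ind x)"
    by (rule integral_mono[OF i2 _ pw]) (use i1 in \<open>simp add: H_def ind_def\<close>)
  finally show "integral\<^sup>L (lebM M) (\<lambda>x. H0 M \<tau> (\<lambda>j. x j - l j) * (if l1norm M (\<lambda>j. x j - l j) \<le> 2 * real M * \<tau> then 1 else 0))
      \<ge> (\<tau>^(2*M) * (pi/(2*\<tau>^3))^M) / 2" by (simp add: H_def ind_def K_def)
qed


lemma pu_meas: "(\<lambda>x. prior_unnorm M \<alpha> \<tau> R (\<lambda>j. x j - l j)) \<in> borel_measurable (lebM M)"
  unfolding lebM_def prior_unnorm_def huber_def l1norm_def by measurable

lemma pu_meas0: "prior_unnorm M \<alpha> \<tau> R \<in> borel_measurable (lebM M)"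
  unfolding lebM_def prior_unnorm_def huber_def l1norm_def by measurable

lemma p0u_meas: "p0_unnorm M \<alpha> \<tau> R l \<in> borel_measurable (lebM M)"
  unfolding lebM_def p0_unnorm_def prior_dens_def prior_unnorm_def huber_def l1norm_def by measurable

lemma pd_meas: "prior_dens M \<alpha> \<tau> R \<in> borel_measurable (lebM M)"
  unfolding lebM_def prior_dens_def prior_unnorm_def huber_def l1norm_def by measurable

lemma sf: "sigma_finite_measure (lebM M)"
  unfolding lebM_def by (intro product_sigma_finite.sigma_finite psf) auto

lemma huber_nonneg: "huber t \<ge> 0"
  unfolding huber_def by auto

lemma huber_lip: "huber a - huber b \<le> 2 * \<bar>a - b\<bar>"
proof -
  have c1: "a\<^sup>2 - b\<^sup>2 \<le> 2 * \<bar>a - b\<bar>" if "\<bar>a\<bar> \<le> 1" "\<bar>b\<bar> \<le> 1"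
  proof -
    have "a\<^sup>2 - b\<^sup>2 = (a - b) * (a + b)" by (simp add: power2_eq_square algebra_simps)
    also have "\<dots> \<le> \<bar>a - b\<bar> * \<bar>a + b\<bar>" by (metis abs_ge_self abs_mult)
    also have "\<dots> \<le> \<bar>a - b\<bar> * 2" using that by (intro mult_left_mono) auto
    finally show ?thesis by simp
  qed
  have c2: "a\<^sup>2 - (2 * \<bar>b\<bar> - 1) \<le> 2 * \<bar>a - b\<bar>" if "\<bar>a\<bar> \<le> 1" "\<not> \<bar>b\<bar> \<le> 1"
  proof -
    have "\<bar>a\<bar>^2 \<le> 1" using power_le_one[of "\<bar>a\<bar>" 2] that by simp
    then have "a\<^sup>2 \<le> 1" by simp
    moreover have "0 \<le> \<bar>a - b\<bar>" by simp
    ultimately show ?thesis using that by smt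
  qed
  have c3: "2 * \<bar>a\<bar> - 1 - b\<^sup>2 \<le> 2 * \<bar>a - b\<bar>" if "\<not> \<bar>a\<bar> \<le> 1" "\<bar>b\<bar> \<le> 1"
  proof -
    have "2 * \<bar>b\<bar> \<le> 1 + b\<^sup>2" using sum_squares_bound[of 1 "\<bar>b\<bar>"] by simp
    moreover have "\<bar>a\<bar> - \<bar>b\<bar> \<le> \<bar>a - b\<bar>" by (rule abs_triangle_ineq2)
    ultimately show ?thesis by smt
  qed
  have c4: "(2 * \<bar>a\<bar> - 1) - (2 * \<bar>b\<bar> - 1) \<le> 2 * \<bar>a - b\<bar>"
    using abs_triangle_ineq2[of a b] by smt
  show ?thesis
  proof (cases "\<bar>a\<bar> \<le> 1")
    case True
    then show ?thesis using c1 c2 unfolding huber_def by (cases "\<bar>b\<bar> \<le> 1") auto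
  next
    case False
    then show ?thesis using c3 c4 unfolding huber_def by (cases "\<bar>b\<bar> \<le> 1") auto
  qed
qed

lemma huber_small: "\<bar>t\<bar> \<le> 1/2 \<Longrightarrow> huber t \<le> \<bar>t\<bar> / 2"
proof -
  assume a: "\<bar>t\<bar> \<le> 1/2"
  then have "t\<^sup>2 = \<bar>t\<bar> * \<bar>t\<bar>" by (simp add: power2_eq_square)
  also have "\<dots> \<le> \<bar>t\<bar> * (1/2)" using a by (intro mult_left_mono) auto
  finally show ?thesis using a unfolding huber_def by auto
qed

lemma sq_ratio:
  fixes \<tau> u v :: real assumes t: "\<tau> > 0"
  shows "\<tau>\<^sup>2 + v\<^sup>2 \<le> (\<tau>\<^sup>2 + u\<^sup>2) * (1 + \<bar>u - v\<bar>/\<tau>)\<^sup>2"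
proof -
  define d where "d = \<bar>u - v\<bar>"
  have d0: "d \<ge> 0" by (simp add: d_def)
  have v2: "v\<^sup>2 \<le> u\<^sup>2 + 2 * \<bar>u\<bar> * d + d\<^sup>2"
  proof -
    have "\<bar>v\<bar> \<le> \<bar>u\<bar> + d" unfolding d_def by linarith
    then have "\<bar>v\<bar>\<^sup>2 \<le> (\<bar>u\<bar> + d)\<^sup>2" by (intro power_mono) auto
    then show ?thesis by (simp add: power2_eq_square algebra_simps)
  qed
  have am: "2 * \<bar>u\<bar> * \<tau> \<le> \<tau>\<^sup>2 + u\<^sup>2" using sum_squares_bound[of \<tau> "\<bar>u\<bar>"] by (simp add: mult_ac)
  have "(\<tau>\<^sup>2 + u\<^sup>2) * (1 + d/\<tau>)\<^sup>2 = (\<tau>\<^sup>2 + u\<^sup>2) + 2 * d * ((\<tau>\<^sup>2 + u\<^sup>2)/\<tau>) + (\<tau>\<^sup>2 + u\<^sup>2) * (d/\<tau>)\<^sup>2"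
    using t by (simp add: power2_eq_square field_simps)
  moreover have "2 * \<bar>u\<bar> * d \<le> 2 * d * ((\<tau>\<^sup>2 + u\<^sup>2)/\<tau>)"
  proof -
    have "(\<tau>\<^sup>2 + u\<^sup>2)/\<tau> \<ge> 2 * \<bar>u\<bar>" using am t by (simp add: field_simps)
    then have "(\<tau>\<^sup>2 + u\<^sup>2)/\<tau> \<ge> \<bar>u\<bar>" by simp
    then have "d * \<bar>u\<bar> \<le> d * ((\<tau>\<^sup>2 + u\<^sup>2)/\<tau>)" using d0 by (intro mult_left_mono) auto
    then have h: "2 * (d * \<bar>u\<bar>) \<le> 2 * (d * ((\<tau>\<^sup>2 + u\<^sup>2)/\<tau>))" by (rule mult_left_mono) simp
    have e1: "2 * \<bar>u\<bar> * d = 2 * (d * \<bar>u\<bar>)" by (simp only: mult_ac)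
    have e2: "2 * d * ((\<tau>\<^sup>2 + u\<^sup>2)/\<tau>) = 2 * (d * ((\<tau>\<^sup>2 + u\<^sup>2)/\<tau>))" by (simp only: mult_ac)
    show ?thesis unfolding e1 e2 by (rule h)
  qed
  moreover have "d\<^sup>2 \<le> (\<tau>\<^sup>2 + u\<^sup>2) * (d/\<tau>)\<^sup>2"
  proof -
    have "\<tau>\<^sup>2 * (d/\<tau>)\<^sup>2 = d\<^sup>2" using t by (simp add: power2_eq_square field_simps)
    moreover have "\<tau>\<^sup>2 * (d/\<tau>)\<^sup>2 \<le> (\<tau>\<^sup>2 + u\<^sup>2) * (d/\<tau>)\<^sup>2" by (intro mult_right_mono) auto
    ultimately show ?thesis by simp
  qed
  ultimately have "\<tau>\<^sup>2 + v\<^sup>2 \<le> (\<tau>\<^sup>2 + u\<^sup>2) * (1 + d/\<tau>)\<^sup>2" using v2 by linarith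
  then show ?thesis unfolding d_def .
qed


lemma g_bounds:
  assumes t: "\<tau> > 0"
  shows "0 \<le> prior_unnorm M \<alpha> \<tau> R u" "prior_unnorm M \<alpha> \<tau> R u \<le> H0 M \<tau> u"
proof -
  have dp: "\<tau>\<^sup>2 + (u j)\<^sup>2 > 0" for j using t by (simp add: add_pos_nonneg)
  have f0: "0 \<le> exp (- huber (\<alpha> * u j)) / (\<tau>\<^sup>2 + (u j)\<^sup>2)\<^sup>2" for j by simp
  have f1: "exp (- huber (\<alpha> * u j)) / (\<tau>\<^sup>2 + (u j)\<^sup>2)\<^sup>2 \<le> phi \<tau> (u j)" for j
  proof -
    have "exp (- huber (\<alpha> * u j)) \<le> 1" using huber_nonneg by simp
    then show ?thesis unfolding phi_def using dp[of j] by (intro divide_right_mono) auto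
  qed
  have P0: "0 \<le> (\<Prod>j<M. exp (- huber (\<alpha> * u j)) / (\<tau>\<^sup>2 + (u j)\<^sup>2)\<^sup>2)"
    by (intro prod_nonneg) (simp add: f0)
  have P1: "(\<Prod>j<M. exp (- huber (\<alpha> * u j)) / (\<tau>\<^sup>2 + (u j)\<^sup>2)\<^sup>2) \<le> (\<Prod>j<M. phi \<tau> (u j))"
    by (intro prod_mono) (simp add: f0 f1)
  show "0 \<le> prior_unnorm M \<alpha> \<tau> R u" unfolding prior_unnorm_def using P0 t by simp
  have "\<tau> ^ (2 * M) * (\<Prod>j<M. exp (- huber (\<alpha> * u j)) / (\<tau>\<^sup>2 + (u j)\<^sup>2)\<^sup>2) \<le> \<tau> ^ (2 * M) * (\<Prod>j<M. phi \<tau> (u j))"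
    using P1 t by (intro mult_left_mono) auto
  then show "prior_unnorm M \<alpha> \<tau> R u \<le> H0 M \<tau> u" unfolding prior_unnorm_def H0_def
    using P0 t H0_nonneg[OF t, of M u] unfolding H0_def by auto
qed

lemma l1_comp: "j < M \<Longrightarrow> \<bar>u j\<bar> \<le> l1norm M u"
  unfolding l1norm_def by (rule member_le_sum[of j "{..<M}" "\<lambda>j. \<bar>u j\<bar>"]) auto

lemma l1_nonneg: "l1norm M u \<ge> 0"
  unfolding l1norm_def by (intro sum_nonneg) auto

lemma g_lower:
  assumes t: "\<tau> > 0" and a: "\<alpha> > 0" and R: "R > ereal (2 * real M * \<tau>)"
    and al: "\<alpha> \<le> 1 / (4 * real M * \<tau>)" and u: "l1norm M u \<le> 2 * real M * \<tau>"
  shows "exp (-1/4) * H0 M \<tau> u \<le> prior_unnorm M \<alpha> \<tau> R u"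
proof -
  have M: "M > 0" using al a by (cases M) auto
  have al2: "\<alpha> * (2 * real M * \<tau>) \<le> 1/2"
  proof -
    have "\<alpha> * (4 * real M * \<tau>) \<le> 1" using al M t by (simp add: field_simps)
    then show ?thesis by simp
  qed
  have ind: "ereal (l1norm M u) \<le> R" using u R by (metis ereal_less_eq(3) less_imp_le order_trans)
  have hj: "huber (\<alpha> * u j) \<le> \<alpha> * \<bar>u j\<bar> / 2" if "j < M" for j
  proof -
    have "\<alpha> * \<bar>u j\<bar> \<le> \<alpha> * l1norm M u" using l1_comp[OF that] a by (intro mult_left_mono) auto
    also have "\<dots> \<le> \<alpha> * (2 * real M * \<tau>)" using u a by (intro mult_left_mono) auto
    finally have c: "\<alpha> * \<bar>u j\<bar> \<le> \<alpha> * (2 * real M * \<tau>)" .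
    have "\<bar>\<alpha> * u j\<bar> = \<alpha> * \<bar>u j\<bar>" using a by (simp add: abs_mult)
    then have "\<bar>\<alpha> * u j\<bar> \<le> 1/2" using c al2 by linarith
    then show ?thesis using huber_small[of "\<alpha> * u j"] a by (simp add: abs_mult)
  qed
  have "(\<Sum>j<M. huber (\<alpha> * u j)) \<le> (\<Sum>j<M. \<alpha> * \<bar>u j\<bar> / 2)" by (intro sum_mono hj) auto
  also have "\<dots> = \<alpha> * l1norm M u / 2" unfolding l1norm_def by (simp add: sum_distrib_left sum_divide_distrib)
  also have "\<dots> \<le> \<alpha> * (2 * real M * \<tau>) / 2" using u a by (intro divide_right_mono mult_left_mono) auto
  also have "\<dots> \<le> 1/4" using al2 by simp
  finally have S: "(\<Sum>j<M. huber (\<alpha> * u j)) \<le> 1/4" .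
  have "(\<Prod>j<M. exp (- huber (\<alpha> * u j)) / (\<tau>\<^sup>2 + (u j)\<^sup>2)\<^sup>2) = (\<Prod>j<M. exp (- huber (\<alpha> * u j)) * phi \<tau> (u j))"
    unfolding phi_def by (rule prod.cong) auto
  also have "\<dots> = exp (\<Sum>j<M. - huber (\<alpha> * u j)) * (\<Prod>j<M. phi \<tau> (u j))"
    by (simp add: prod.distrib exp_sum)
  finally have eq: "(\<Prod>j<M. exp (- huber (\<alpha> * u j)) / (\<tau>\<^sup>2 + (u j)\<^sup>2)\<^sup>2) = exp (- (\<Sum>j<M. huber (\<alpha> * u j))) * (\<Prod>j<M. phi \<tau> (u j))"
    by (simp add: sum_negf)
  have "exp (-1/4) \<le> exp (- (\<Sum>j<M. huber (\<alpha> * u j)))" using S by simp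
  then have "exp (-1/4) * H0 M \<tau> u \<le> exp (- (\<Sum>j<M. huber (\<alpha> * u j))) * H0 M \<tau> u"
    using H0_nonneg[OF t] by (intro mult_right_mono) auto
  also have "\<dots> = prior_unnorm M \<alpha> \<tau> R u" unfolding prior_unnorm_def eq H0_def using ind by simp
  finally show ?thesis .
qed

lemma g_pos:
  assumes t: "\<tau> > 0" and u: "ereal (l1norm M u) \<le> R"
  shows "prior_unnorm M \<alpha> \<tau> R u > 0"
proof -
  have dp: "\<tau>\<^sup>2 + (u j)\<^sup>2 > 0" for j using t by (simp add: add_pos_nonneg)
  have "(\<Prod>j<M. exp (- huber (\<alpha> * u j)) / (\<tau>\<^sup>2 + (u j)\<^sup>2)\<^sup>2) > 0"
    by (intro prod_pos divide_pos_pos) (use dp in auto)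
  then show ?thesis unfolding prior_unnorm_def using u t by simp
qed

lemma ln_g:
  assumes t: "\<tau> > 0" and u: "ereal (l1norm M u) \<le> R"
  shows "ln (prior_unnorm M \<alpha> \<tau> R u) = 2 * real M * ln \<tau> + (\<Sum>j<M. - huber (\<alpha> * u j) - 2 * ln (\<tau>\<^sup>2 + (u j)\<^sup>2))"
proof -
  have dp: "\<tau>\<^sup>2 + (u j)\<^sup>2 > 0" for j using t by (simp add: add_pos_nonneg)
  have fp: "exp (- huber (\<alpha> * u j)) / (\<tau>\<^sup>2 + (u j)\<^sup>2)\<^sup>2 > 0" for j using dp[of j] by (intro divide_pos_pos) auto
  have Pp: "(\<Prod>j<M. exp (- huber (\<alpha> * u j)) / (\<tau>\<^sup>2 + (u j)\<^sup>2)\<^sup>2) > 0"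
    by (intro prod_pos) (use fp in simp)
  have "ln (prior_unnorm M \<alpha> \<tau> R u) = ln (\<tau> ^ (2 * M) * (\<Prod>j<M. exp (- huber (\<alpha> * u j)) / (\<tau>\<^sup>2 + (u j)\<^sup>2)\<^sup>2))"
    unfolding prior_unnorm_def using u by simp
  also have "\<dots> = ln (\<tau> ^ (2 * M)) + ln (\<Prod>j<M. exp (- huber (\<alpha> * u j)) / (\<tau>\<^sup>2 + (u j)\<^sup>2)\<^sup>2)"
    using t Pp by (intro ln_mult_pos) auto
  also have "ln (\<tau> ^ (2 * M)) = 2 * real M * ln \<tau>" using t by (simp add: ln_realpow)
  also have "ln (\<Prod>j<M. exp (- huber (\<alpha> * u j)) / (\<tau>\<^sup>2 + (u j)\<^sup>2)\<^sup>2) = (\<Sum>j<M. ln (exp (- huber (\<alpha> * u j)) / (\<tau>\<^sup>2 + (u j)\<^sup>2)\<^sup>2))"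
  proof (rule ln_prod)
    fix i show "exp (- huber (\<alpha> * u i)) / (\<tau>\<^sup>2 + (u i)\<^sup>2)\<^sup>2 \<noteq> 0" using fp[of i] by linarith
  qed simp
  also have "\<dots> = (\<Sum>j<M. - huber (\<alpha> * u j) - 2 * ln (\<tau>\<^sup>2 + (u j)\<^sup>2))"
  proof (rule sum.cong[OF refl])
    fix j
    show "ln (exp (- huber (\<alpha> * u j)) / (\<tau>\<^sup>2 + (u j)\<^sup>2)\<^sup>2) = - huber (\<alpha> * u j) - 2 * ln (\<tau>\<^sup>2 + (u j)\<^sup>2)"
      using dp[of j] t by (simp add: ln_div ln_realpow)
  qed
  finally show ?thesis .
qed

lemma g_ratio:
  assumes t: "\<tau> > 0" and a: "\<alpha> > 0" and u: "ereal (l1norm M u) \<le> R" and v: "ereal (l1norm M v) \<le> R"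
  shows "ln (prior_unnorm M \<alpha> \<tau> R u) - ln (prior_unnorm M \<alpha> \<tau> R v)
     \<le> (\<Sum>j<M. 2 * \<alpha> * \<bar>u j - v j\<bar> + 4 * ln (1 + \<bar>u j - v j\<bar> / \<tau>))"
proof -
  have tm: "(- huber (\<alpha> * u j) - 2 * ln (\<tau>\<^sup>2 + (u j)\<^sup>2)) - (- huber (\<alpha> * v j) - 2 * ln (\<tau>\<^sup>2 + (v j)\<^sup>2))
      \<le> 2 * \<alpha> * \<bar>u j - v j\<bar> + 4 * ln (1 + \<bar>u j - v j\<bar> / \<tau>)" for j
  proof -
    have h: "huber (\<alpha> * v j) - huber (\<alpha> * u j) \<le> 2 * \<alpha> * \<bar>u j - v j\<bar>"
    proof -
      have "huber (\<alpha> * v j) - huber (\<alpha> * u j) \<le> 2 * \<bar>\<alpha> * v j - \<alpha> * u j\<bar>" by (rule huber_lip)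
      also have "\<bar>\<alpha> * v j - \<alpha> * u j\<bar> = \<alpha> * \<bar>u j - v j\<bar>"
        using a by (simp add: abs_mult right_diff_distrib[symmetric] abs_minus_commute)
      finally show ?thesis by simp
    qed
    have dp: "\<tau>\<^sup>2 + (u j)\<^sup>2 > 0" using t by (simp add: add_pos_nonneg)
    have cp: "1 + \<bar>u j - v j\<bar> / \<tau> > 0" using t by (simp add: add_pos_nonneg)
    have "ln (\<tau>\<^sup>2 + (v j)\<^sup>2) \<le> ln ((\<tau>\<^sup>2 + (u j)\<^sup>2) * (1 + \<bar>u j - v j\<bar>/\<tau>)\<^sup>2)"
    proof -
      have "0 < (\<tau>\<^sup>2 + (u j)\<^sup>2) * (1 + \<bar>u j - v j\<bar>/\<tau>)\<^sup>2" using dp cp by (intro mult_pos_pos) auto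
      then show ?thesis using sq_ratio[OF t, of "v j" "u j"] t by (subst ln_le_cancel_iff) (auto simp: add_pos_nonneg)
    qed
    also have "\<dots> = ln (\<tau>\<^sup>2 + (u j)\<^sup>2) + 2 * ln (1 + \<bar>u j - v j\<bar>/\<tau>)"
      using dp cp by (simp add: ln_mult ln_realpow)
    finally show ?thesis using h by linarith
  qed
  show ?thesis unfolding ln_g[OF t u] ln_g[OF t v]
    using sum_mono[of "{..<M}", OF tm] by (simp add: sum_subtractf)
qed



lemma ereal_aux: "ereal a \<le> R - ereal c \<Longrightarrow> ereal (a + c) \<le> R" by (cases R) auto

lemma exp14: "exp (1/4::real) \<le> 2"
proof -
  have "1/4 \<le> ln (2::real)" using ln2_ge_two_thirds by simp
  then show ?thesis by (metis exp_le_cancel_iff exp_ln zero_less_numeral)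
qed

lemma l1_tri: "l1norm M x \<le> l1norm M (\<lambda>j. x j - l j) + l1norm M l"
  unfolding l1norm_def sum.distrib[symmetric] by (intro sum_mono) (metis abs_triangle_ineq diff_add_cancel)

theorem lemma3:
  fixes M :: nat and \<tau> \<alpha> :: real and R :: ereal and ls :: "nat \<Rightarrow> real"
  assumes "M \<ge> 2" and "\<tau> > 0" and "\<alpha> > 0"
    and "R > ereal (2 * real M * \<tau>)"
    and "\<alpha> \<le> 1 / (4 * real M * \<tau>)"
    and "ereal (l1norm M ls) \<le> R - ereal (2 * real M * \<tau>)"
  shows "(\<integral>x. (x 0 - ls 0)\<^sup>2 \<partial>p0 M \<alpha> \<tau> R ls) \<le> 4 * \<tau>\<^sup>2 * exp (4 * real M * \<alpha> * \<tau>)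
     \<and> KL_divergence (exp 1) (sparsity_prior M \<alpha> \<tau> R) (p0 M \<alpha> \<tau> R ls)
           \<le> 2 * (\<alpha> * l1norm M ls + 1) + 4 * (\<Sum>j<M. ln (1 + \<bar>ls j\<bar> / \<tau>))"
proof -
  note M2 = assms(1) and t = assms(2) and a = assms(3) and R = assms(4) and al = assms(5) and lsR = assms(6)
  have M: "M > 0" using M2 by simp
  define L where "L = lebM M"
  define g where "g = prior_unnorm M \<alpha> \<tau> R"
  define K where "K = \<tau>^(2*M) * (pi/(2*\<tau>^3))^M"
  define ind where "ind l x = (if l1norm M (\<lambda>j. x j - l j) \<le> 2 * real M * \<tau> then 1 else (0::real))" for l x
  have K0: "K > 0" unfolding K_def using t by simp
  have g0: "0 \<le> g u" for u unfolding g_def by (rule g_bounds(1)[OF t])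
  have gH: "g u \<le> H0 M \<tau> u" for u unfolding g_def by (rule g_bounds(2)[OF t])
  have ind01: "ind l x = 0 \<or> ind l x = 1" for l x unfolding ind_def by auto
  have gl: "exp (-1/4) * (H0 M \<tau> (\<lambda>j. x j - l j) * ind l x) \<le> g (\<lambda>j. x j - l j) * ind l x" for l x
  proof (cases "l1norm M (\<lambda>j. x j - l j) \<le> 2 * real M * \<tau>")
    case True
    then show ?thesis using g_lower[OF t a R al True] unfolding g_def ind_def by simp
  qed (simp add: ind_def)
  have ig: "integrable L (\<lambda>x. g (\<lambda>j. x j - l j))" for l
    unfolding L_def
  proof (rule Bochner_Integration.integrable_bound[OF H0_int(1)[OF t, of M l]])
    show "(\<lambda>x. g (\<lambda>j. x j - l j)) \<in> borel_measurable (lebM M)" unfolding g_def by (rule pu_meas)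
    show "AE x in lebM M. norm (g (\<lambda>j. x j - l j)) \<le> norm (H0 M \<tau> (\<lambda>j. x j - l j))"
      using g0 gH H0_nonneg[OF t] by (intro AE_I2) auto
  qed
  have igi: "integrable L (\<lambda>x. g (\<lambda>j. x j - l j) * ind l x)" for l
  proof (rule Bochner_Integration.integrable_bound[OF ig[of l]])
    show "(\<lambda>x. g (\<lambda>j. x j - l j) * ind l x) \<in> borel_measurable L"
      unfolding L_def g_def ind_def lebM_def prior_unnorm_def huber_def l1norm_def by measurable
    show "AE x in L. norm (g (\<lambda>j. x j - l j) * ind l x) \<le> norm (g (\<lambda>j. x j - l j))"
    proof (rule AE_I2)
      fix x show "norm (g (\<lambda>j. x j - l j) * ind l x) \<le> norm (g (\<lambda>j. x j - l j))"
        using ind01[of l x] g0 by (cases "ind l x = 0") auto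
    qed
  qed
  have LB: "exp (-1/4) * K / 2 \<le> integral\<^sup>L L (\<lambda>x. g (\<lambda>j. x j - l j) * ind l x)" for l
  proof -
    have "exp (-1/4) * K / 2 \<le> exp (-1/4) * integral\<^sup>L L (\<lambda>x. H0 M \<tau> (\<lambda>j. x j - l j) * ind l x)"
      using markov(2)[OF t M, of l] unfolding K_def L_def ind_def by simp
    also have "\<dots> = integral\<^sup>L L (\<lambda>x. exp (-1/4) * (H0 M \<tau> (\<lambda>j. x j - l j) * ind l x))" by simp
    also have "\<dots> \<le> integral\<^sup>L L (\<lambda>x. g (\<lambda>j. x j - l j) * ind l x)"
    proof (rule integral_mono[OF _ igi gl])
      show "integrable L (\<lambda>x. exp (-1/4) * (H0 M \<tau> (\<lambda>j. x j - l j) * ind l x))"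
        using markov(1)[OF t M, of l] unfolding L_def ind_def by simp
    qed
    finally show ?thesis .
  qed
  define C where "C = prior_const M \<alpha> \<tau> R"
  have C_eq: "C = integral\<^sup>L L g" unfolding C_def prior_const_def L_def g_def ..
  have ig0: "integrable L g" using ig[of "\<lambda>_. 0"] by simp
  have CK: "C \<le> K"
  proof -
    have "C \<le> integral\<^sup>L L (\<lambda>x. H0 M \<tau> (\<lambda>j. x j - 0))"
      unfolding C_eq using ig0 H0_int(1)[OF t, of M "\<lambda>_. 0"] gH by (intro integral_mono) (auto simp: L_def)
    then show ?thesis using H0_int(2)[OF t, of M "\<lambda>_. 0"] unfolding K_def L_def by simp
  qed
  have Cpos: "C > 0"
  proof -
    have "integral\<^sup>L L (\<lambda>x. g (\<lambda>j. x j - 0) * ind (\<lambda>_. 0) x) \<le> C"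
      unfolding C_eq
    proof (intro integral_mono)
      fix x show "g (\<lambda>j. x j - 0) * ind (\<lambda>_. 0) x \<le> g x"
        using ind01[of "\<lambda>_. 0" x] g0[of x] by (cases "ind (\<lambda>_. 0) x = 0") auto
    qed (use igi[of "\<lambda>_. 0"] ig0 in auto)
    moreover have "exp (-1/4) * K / 2 > 0" using K0 by simp
    ultimately show ?thesis using LB[of "\<lambda>_. 0"] by linarith
  qed
  define f where "f = p0_unnorm M \<alpha> \<tau> R ls"
  define W where "W = integral\<^sup>L L (\<lambda>x. g (\<lambda>j. x j - ls j) * ind ls x)"
  have f_eq: "f x = g (\<lambda>j. x j - ls j) * ind ls x / C" for x
    unfolding f_def p0_unnorm_def prior_dens_def g_def ind_def C_def by simp
  have f0: "f x \<ge> 0" for x unfolding f_eq using g0[of "\<lambda>j. x j - ls j"] ind01[of ls x] Cpos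
    by (cases "ind ls x = 0") auto
  have if_: "integrable L f" unfolding f_eq[abs_def] by (rule integrable_divide[OF igi])
  define Z where "Z = integral\<^sup>L L f"
  have Z_eq: "Z = W / C" unfolding Z_def W_def f_eq by simp
  have W_lb: "exp (-1/4) * K / 2 \<le> W" unfolding W_def by (rule LB)
  have Wpos: "W > 0"
  proof -
    have "exp (-1/4) * K / 2 > 0" using K0 by simp
    then show ?thesis using W_lb by linarith
  qed
  have Zpos: "Z > 0" unfolding Z_eq using Wpos Cpos by simp
  have Z_lb: "exp (-1/4) / 2 \<le> Z"
  proof -
    have "exp (-1/4) / 2 = (exp (-1/4) * K / 2) / K" using K0 by simp
    also have "\<dots> \<le> W / K" using W_lb K0 by (intro divide_right_mono) auto
    also have "\<dots> \<le> W / C" using Wpos Cpos CK by (intro divide_left_mono) auto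
    finally show ?thesis unfolding Z_eq .
  qed
  have p0_eq: "p0 M \<alpha> \<tau> R ls = density L (\<lambda>x. ennreal (f x / Z))"
    unfolding p0_def f_def Z_def L_def ..
  have fm: "(\<lambda>x. f x / Z) \<in> borel_measurable L" unfolding f_def L_def using p0u_meas by measurable
  have claim1: "(\<integral>x. (x 0 - ls 0)\<^sup>2 \<partial>p0 M \<alpha> \<tau> R ls) \<le> 4 * \<tau>\<^sup>2 * exp (4 * real M * \<alpha> * \<tau>)"
  proof -
    have "(\<integral>x. (x 0 - ls 0)\<^sup>2 \<partial>p0 M \<alpha> \<tau> R ls) = integral\<^sup>L L (\<lambda>x. f x / Z * (x 0 - ls 0)\<^sup>2)"
    proof -
      have m0: "(\<lambda>x. x 0) \<in> borel_measurable (Pi\<^sub>M {..<M} (\<lambda>_. lborel::real measure))"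
        using measurable_component_singleton[of 0 "{..<M}" "\<lambda>_. lborel::real measure"] M by simp
      have m1: "(\<lambda>x. (x 0 - ls 0)\<^sup>2) \<in> borel_measurable (Pi\<^sub>M {..<M} (\<lambda>_. lborel::real measure))"
        using m0 by (intro borel_measurable_power borel_measurable_diff) auto
      show ?thesis unfolding p0_eq using fm f0 Zpos m1 by (subst integral_density) (auto simp: L_def lebM_def)
    qed
    also have "\<dots> \<le> 2 * exp (1/4) * \<tau>\<^sup>2"
    proof (cases "integrable L (\<lambda>x. f x / Z * (x 0 - ls 0)\<^sup>2)")
      case True
      have iR: "integrable L (\<lambda>x. 1 / W * ((x 0 - ls 0)\<^sup>2 * H0 M \<tau> (\<lambda>j. x j - ls j)))"
        using H0_int_sq(1)[OF t M, of ls] unfolding L_def by simp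
      have pw: "f x / Z * (x 0 - ls 0)\<^sup>2 \<le> 1 / W * ((x 0 - ls 0)\<^sup>2 * H0 M \<tau> (\<lambda>j. x j - ls j))" for x
      proof -
        have "f x / Z = g (\<lambda>j. x j - ls j) * ind ls x / W" unfolding f_eq Z_eq using Cpos by simp
        also have "\<dots> \<le> H0 M \<tau> (\<lambda>j. x j - ls j) / W"
          using gH g0 ind01[of ls x] Wpos H0_nonneg[OF t] by (intro divide_right_mono) auto
        finally have "f x / Z * (x 0 - ls 0)\<^sup>2 \<le> H0 M \<tau> (\<lambda>j. x j - ls j) / W * (x 0 - ls 0)\<^sup>2"
          by (intro mult_right_mono) auto
        then show ?thesis by (simp add: mult_ac)
      qed
      have "integral\<^sup>L L (\<lambda>x. f x / Z * (x 0 - ls 0)\<^sup>2) \<le> integral\<^sup>L L (\<lambda>x. 1 / W * ((x 0 - ls 0)\<^sup>2 * H0 M \<tau> (\<lambda>j. x j - ls j)))"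
        by (rule integral_mono[OF True iR pw])
      also have "\<dots> = 1 / W * (\<tau>\<^sup>2 * K)"
        using H0_int_sq(2)[OF t M, of ls] unfolding L_def K_def by simp
      also have "\<dots> \<le> 1 / (exp (-1/4) * K / 2) * (\<tau>\<^sup>2 * K)"
        using W_lb K0 t Wpos by (intro mult_right_mono divide_left_mono) auto
      also have "\<dots> = 2 * exp (1/4) * \<tau>\<^sup>2" using K0 by (simp add: exp_minus field_simps)
      finally show ?thesis .
    next
      case False
      show ?thesis unfolding not_integrable_integral_eq[OF False] using t by simp
    qed
    also have "\<dots> \<le> 4 * \<tau>\<^sup>2" using exp14 by (intro mult_right_mono) auto
    also have "\<dots> \<le> 4 * \<tau>\<^sup>2 * exp (4 * real M * \<alpha> * \<tau>)" using a t by simp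
    finally show ?thesis .
  qed
  define D where "D = 2 * \<alpha> * l1norm M ls + 4 * (\<Sum>j<M. ln (1 + \<bar>ls j\<bar> / \<tau>))"
  have D0: "D \<ge> 0" unfolding D_def using a t l1_nonneg[of M ls]
    by (intro add_nonneg_nonneg mult_nonneg_nonneg sum_nonneg) auto
  have claim2: "KL_divergence (exp 1) (sparsity_prior M \<alpha> \<tau> R) (p0 M \<alpha> \<tau> R ls) \<le> D + 2"
  proof -
    interpret sigma_finite_measure L unfolding L_def by (rule sf)
    have pd_eq: "prior_dens M \<alpha> \<tau> R x = g x / C" for x unfolding prior_dens_def g_def C_def ..
    have supp: "ereal (l1norm M x) \<le> R \<and> ereal (l1norm M (\<lambda>j. x j - ls j)) \<le> R" if "f x \<noteq> 0" for x
    proof -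
      have i1: "l1norm M (\<lambda>j. x j - ls j) \<le> 2 * real M * \<tau>" using that unfolding f_eq ind_def by (auto split: if_splits)
      have "l1norm M x \<le> l1norm M ls + 2 * real M * \<tau>" using l1_tri[of M x ls] i1 by linarith
      then have "ereal (l1norm M x) \<le> ereal (l1norm M ls + 2 * real M * \<tau>)" by simp
      also have "\<dots> \<le> R" by (rule ereal_aux[OF lsR])
      finally show ?thesis using i1 R by (metis ereal_less_eq(3) less_imp_le order_trans)
    qed
    have KLeq: "KL_divergence (exp 1) (sparsity_prior M \<alpha> \<tau> R) (p0 M \<alpha> \<tau> R ls)
        = integral\<^sup>L L (\<lambda>x. f x / Z * log (exp 1) ((f x / Z) / prior_dens M \<alpha> \<tau> R x))"
      unfolding p0_eq sparsity_prior_def L_def[symmetric]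
    proof (rule KL_density_density)
      show "prior_dens M \<alpha> \<tau> R \<in> borel_measurable L" unfolding L_def by (rule pd_meas)
      show "AE x in L. 0 \<le> prior_dens M \<alpha> \<tau> R x" using g0 Cpos unfolding pd_eq by (intro AE_I2) auto
      show "AE x in L. 0 \<le> f x / Z" using f0 Zpos by (intro AE_I2) auto
      show "AE x in L. prior_dens M \<alpha> \<tau> R x = 0 \<longrightarrow> f x / Z = 0"
      proof (intro AE_I2 impI)
        fix x assume pz: "prior_dens M \<alpha> \<tau> R x = 0"
        show "f x / Z = 0"
        proof (rule ccontr)
          assume "f x / Z \<noteq> 0"
          then have "f x \<noteq> 0" by auto
          then have "g x > 0" using supp g_pos[OF t] unfolding g_def by blast
          then show False using pz Cpos unfolding pd_eq by simp
        qed
      qed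
    qed (use fm in auto)
    also have "\<dots> \<le> D + 2"
    proof (cases "integrable L (\<lambda>x. f x / Z * log (exp 1) ((f x / Z) / prior_dens M \<alpha> \<tau> R x))")
      case True
      have iR: "integrable L (\<lambda>x. (D + 2) * (f x / Z))" using if_ by simp
      have pw: "f x / Z * log (exp 1) ((f x / Z) / prior_dens M \<alpha> \<tau> R x) \<le> (D + 2) * (f x / Z)" for x
      proof (cases "f x = 0")
        case True then show ?thesis by simp
      next
        case False
        then have fp: "f x > 0" using f0[of x] by simp
        from supp[OF False] have sx: "ereal (l1norm M x) \<le> R" and su: "ereal (l1norm M (\<lambda>j. x j - ls j)) \<le> R" by auto
        have gx: "g x > 0" using g_pos[OF t sx] unfolding g_def .
        have gu: "g (\<lambda>j. x j - ls j) > 0" using g_pos[OF t su] unfolding g_def .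
        have indx: "ind ls x = 1" using fp ind01[of ls x] unfolding f_eq by auto
        have q: "(f x / Z) / prior_dens M \<alpha> \<tau> R x = g (\<lambda>j. x j - ls j) / (g x * Z)"
          unfolding f_eq pd_eq indx using Cpos by (simp add: field_simps)
        have "log (exp 1) ((f x / Z) / prior_dens M \<alpha> \<tau> R x) = ln (g (\<lambda>j. x j - ls j)) - ln (g x) - ln Z"
          unfolding q log_def using gx gu Zpos by (simp add: ln_div ln_mult)
        also have "\<dots> \<le> D + 2"
        proof -
          have r: "ln (g (\<lambda>j. x j - ls j)) - ln (g x) \<le> (\<Sum>j<M. 2 * \<alpha> * \<bar>(x j - ls j) - x j\<bar> + 4 * ln (1 + \<bar>(x j - ls j) - x j\<bar> / \<tau>))"
            unfolding g_def by (rule g_ratio[OF t a su sx])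
          have "(\<Sum>j<M. 2 * \<alpha> * \<bar>(x j - ls j) - x j\<bar> + 4 * ln (1 + \<bar>(x j - ls j) - x j\<bar> / \<tau>)) = D"
            unfolding D_def l1norm_def by (simp add: sum.distrib sum_distrib_left)
          moreover have "- ln Z \<le> 2"
          proof -
            have "ln (exp (-1/4) / 2) \<le> ln Z" using Z_lb Zpos by (subst ln_le_cancel_iff) auto
            moreover have "ln (exp (-1/4) / 2) = -1/4 - ln (2::real)" by (simp add: ln_div)
            moreover have "ln (2::real) \<le> 1" using ln_le_minus_one[of 2] by simp
            ultimately show ?thesis by linarith
          qed
          ultimately show ?thesis using r by linarith
        qed
        finally have "log (exp 1) ((f x / Z) / prior_dens M \<alpha> \<tau> R x) \<le> D + 2" .
        then have "f x / Z * log (exp 1) ((f x / Z) / prior_dens M \<alpha> \<tau> R x) \<le> f x / Z * (D + 2)"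
          using fp Zpos by (intro mult_left_mono) auto
        then show ?thesis by (simp add: mult_ac)
      qed
      have "integral\<^sup>L L (\<lambda>x. f x / Z * log (exp 1) ((f x / Z) / prior_dens M \<alpha> \<tau> R x)) \<le> integral\<^sup>L L (\<lambda>x. (D + 2) * (f x / Z))"
        by (rule integral_mono[OF True iR pw])
      also have "\<dots> = (D + 2) * (Z / Z)" unfolding Z_def by simp
      also have "\<dots> = D + 2" using Zpos by simp
      finally show ?thesis .
    next
      case False
      show ?thesis unfolding not_integrable_integral_eq[OF False] using D0 by simp
    qed
    finally show ?thesis .
  qed
  show ?thesis using claim1 claim2 unfolding D_def by (simp add: algebra_simps)
qed


end
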